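(* Fix $d\ge 1$, $L>0$, $V\in\mathscr V$ and $\theta\ge 0$. There exists $B_0<\infty$ such that for every $\rho\in\mathscr P$ with $\|\rho\|_{\infty}>B_0$ there is another $\rho^{\ddagger}\in\mathscr P$ with $\mathcal F_\theta(\rho)>\mathcal F_\theta(\rho^{\ddagger})$.
   Context: $\mathbb T_L^d=\mathbb R^d/(L\mathbb Z)^d$. The class $\mathscr V$ consists of measurable $V:\mathbb R^d\to\mathbb R$ with $V\in L^1(\mathbb R^d)$, negative part $V^-\in L^\infty$ (so $V\ge -V_0$ for some $V_0<\infty$), $V(x)=V(-x)$, and $V(x)=0$ for $|x|>a$, where $0<a<L/2$; $V$ is regarded as a function on $\mathbb T_L^d$ by periodization. $\mathscr P$ denotes the set of probability densities on $\mathbb T_L^d$, and $\rho_0\equiv L^{-d}$ the uniform density. For $\theta\ge0$ the free energy is $\mathcal F_\theta(\rho)=\mathcal S(\rho)+\tfrac12\theta L^d\mathcal E(\rho,\rho)$, where $\mathcal S(\rho)=\int_{\mathbb T_L^d}\rho\log\rho\,dx$ (set to $+\infty$ if $\rho\log\rho\notin L^1$) and $\mathcal E(f,g)=\int_{\mathbb T_L^d\times\mathbb T_L^d}V(x-y)f(x)g(y)\,dx\,dy$. *)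

theory Defs
  imports "HOL-Analysis.Analysis" "HOL-Probability.Essential_Supremum"
begin

text \<open>Integer lattice Z^d inside R^d (R^d = real^'n, d = CARD('n)).\<close>
definition lattice :: "(real^'n) set" where
  "lattice = {k. \<forall>i. k $ i \<in> \<int>}"

text \<open>Fundamental domain [0,L)^d of the torus R^d/(L Z)^d.\<close>
definition cube :: "real \<Rightarrow> (real^'n) set" where
  "cube L = {x. \<forall>i. 0 \<le> x $ i \<and> x $ i < L}"

definition potential_class :: "real \<Rightarrow> real \<Rightarrow> (real^'n \<Rightarrow> real) set" where
  "potential_class L a = {V. V \<in> borel_measurable lborel \<and> integrable lborel V
      \<and> (\<exists>V0. AE x in lborel. - V0 \<le> V x)
      \<and> (\<forall>x. V (- x) = V x)
      \<and> (\<forall>x. norm x > a \<longrightarrow> V x = 0)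
      \<and> 0 < a \<and> a < L / 2}"

definition periodize :: "real \<Rightarrow> (real^'n \<Rightarrow> real) \<Rightarrow> real^'n \<Rightarrow> real" where
  "periodize L V z = infsum (\<lambda>k. V (z - L *\<^sub>R k)) lattice"

text \<open>Probability densities on the torus, represented as (L Z)^d-periodic functions on R^d.\<close>
definition densities :: "real \<Rightarrow> (real^'n \<Rightarrow> real) set" where
  "densities L = {\<rho>. \<rho> \<in> borel_measurable lborel
      \<and> (\<forall>x. 0 \<le> \<rho> x)
      \<and> (\<forall>x k. k \<in> lattice \<longrightarrow> \<rho> (x + L *\<^sub>R k) = \<rho> x)
      \<and> set_integrable lborel (cube L) \<rho>
      \<and> (LINT x:cube L|lborel. \<rho> x) = 1}"

definition entropy :: "real \<Rightarrow> (real^'n \<Rightarrow> real) \<Rightarrow> ereal" where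
  "entropy L \<rho> = (if set_integrable lborel (cube L) (\<lambda>x. \<rho> x * ln (\<rho> x))
      then ereal (LINT x:cube L|lborel. \<rho> x * ln (\<rho> x)) else \<infinity>)"

text \<open>Energy E(rho,rho) = int int V(x-y) rho(x) rho(y); the integrand is bounded below by an
  integrable function, so if it is not integrable its integral is +infinity.\<close>
definition energy :: "real \<Rightarrow> (real^'n \<Rightarrow> real) \<Rightarrow> (real^'n \<Rightarrow> real) \<Rightarrow> ereal" where
  "energy L V \<rho> = (let g = (\<lambda>(x,y). periodize L V (x - y) * \<rho> x * \<rho> y) in
      if set_integrable (lborel \<Otimes>\<^sub>M lborel) (cube L \<times> cube L) g
      then ereal (LINT p:cube L \<times> cube L|(lborel \<Otimes>\<^sub>M lborel). g p) else \<infinity>)"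

definition free_energy :: "real \<Rightarrow> (real^'n \<Rightarrow> real) \<Rightarrow> real \<Rightarrow> (real^'n \<Rightarrow> real) \<Rightarrow> ereal" where
  "free_energy L V \<theta> \<rho> = entropy L \<rho>
      + ereal (\<theta> * L ^ CARD('n) / 2) * energy L V \<rho>"

definition sup_norm :: "real \<Rightarrow> (real^'n \<Rightarrow> real) \<Rightarrow> ereal" where
  "sup_norm L \<rho> = esssup (restrict_space lborel (cube L)) (\<lambda>x. ereal \<bar>\<rho> x\<bar>)"

end

theory Submission
  imports Defs
begin

lemma cube_borel[measurable]: "cube L \<in> sets (borel :: (real^'n) measure)"
  unfolding cube_def by measurable

lemma cube_lborel[measurable]: "cube L \<in> sets (lborel :: (real^'n) measure)"
  by simp

lemma cube_emeasure:
  assumes "L > 0"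
  shows "0 < emeasure lborel (cube L :: (real^'n) set)" "emeasure lborel (cube L :: (real^'n) set) < \<infinity>"
proof -
  have s1: "cube L \<subseteq> cbox (0::real^'n) (\<chi> i. L)"
    unfolding cube_def by (auto simp: mem_box_cart less_imp_le)
  have s2: "box (0::real^'n) (\<chi> i. L) \<subseteq> cube L"
    unfolding cube_def by (auto simp: mem_box_cart less_imp_le)
  have "emeasure lborel (cube L :: (real^'n) set) \<le> emeasure lborel (cbox (0::real^'n) (\<chi> i. L))"
    by (rule emeasure_mono[OF s1]) simp
  also have "\<dots> < \<infinity>" by (rule emeasure_lborel_cbox_finite)
  finally show "emeasure lborel (cube L :: (real^'n) set) < \<infinity>" .
  have B: "\<And>b. b \<in> Basis \<Longrightarrow> (0::real^'n) \<bullet> b < (\<chi> i. L) \<bullet> b"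
    using assms by (auto simp: Basis_vec_def inner_axis)
  have "(\<Prod>b\<in>(Basis::(real^'n) set). ((\<chi> i. L) - 0) \<bullet> b) > 0"
    using B by (intro prod_pos) auto
  then have "0 < emeasure lborel (box (0::real^'n) (\<chi> i. L))"
    using B by (subst emeasure_lborel_box) (auto intro: less_imp_le)
  also have "\<dots> \<le> emeasure lborel (cube L :: (real^'n) set)"
    by (rule emeasure_mono[OF s2]) simp
  finally show "0 < emeasure lborel (cube L :: (real^'n) set)" .
qed

definition FF :: "(real^'n) set" where
  "FF = {k \<in> lattice. \<forall>i. \<bar>k $ i\<bar> \<le> 1}"

lemma finite_FF: "finite (FF :: (real^'n) set)"
proof -
  have "(FF::(real^'n) set) \<subseteq> (\<lambda>f. \<chi> i. f i) ` (UNIV \<rightarrow>\<^sub>E ({-1,0,1}::real set))"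
  proof
    fix k :: "real^'n" assume k: "k \<in> FF"
    have "\<And>i. k $ i \<in> {-1,0,1}"
    proof -
      fix i
      from k have "k $ i \<in> \<int>" "\<bar>k $ i\<bar> \<le> 1" by (auto simp: FF_def lattice_def)
      then obtain z :: int where z: "k $ i = of_int z" by (auto elim: Ints_cases)
      have "\<bar>real_of_int z\<bar> \<le> 1" using \<open>\<bar>k $ i\<bar> \<le> 1\<close> by (simp only: z)
      then have "\<bar>z\<bar> \<le> 1" by (metis of_int_abs of_int_le_1_iff)
      then have "z \<in> {-1,0,1}" by auto
      then show "k $ i \<in> {-1,0,1}" using z by auto
    qed
    then have kk: "(\<lambda>i. k $ i) \<in> UNIV \<rightarrow>\<^sub>E ({-1,0,1}::real set)" by auto
    show "k \<in> (\<lambda>f. \<chi> i. f i) ` (UNIV \<rightarrow>\<^sub>E ({-1,0,1}::real set))"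
    proof (rule image_eqI[where x="\<lambda>i. k $ i"])
      show "k = (\<chi> i. (\<lambda>i. k $ i) i)" by simp
    qed (use kk in auto)
  qed
  moreover have "finite ((\<lambda>f. \<chi> i. f i) ` (UNIV \<rightarrow>\<^sub>E ({-1,0,1}::real set)) :: (real^'n) set)"
    by (intro finite_imageI finite_PiE) auto
  ultimately show ?thesis by (rule finite_subset)
qed

lemma prod_eq:
  fixes f h :: "real^'n \<Rightarrow> real"
  assumes [measurable]: "f \<in> borel_measurable lborel" "h \<in> borel_measurable lborel"
    and f0: "\<And>x. 0 \<le> f x" and h0: "\<And>x. 0 \<le> h x"
  shows "(\<integral>\<^sup>+p. ennreal (f (fst p) * h (snd p)) \<partial>(lborel \<Otimes>\<^sub>M lborel))
    = (\<integral>\<^sup>+x. ennreal (f x) \<partial>lborel) * (\<integral>\<^sup>+y. ennreal (h y) \<partial>lborel)"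
proof -
  have m: "(\<lambda>p. ennreal (f (fst p) * h (snd p))) \<in> borel_measurable (lborel \<Otimes>\<^sub>M lborel)"
    by measurable
  have "(\<integral>\<^sup>+p. ennreal (f (fst p) * h (snd p)) \<partial>(lborel \<Otimes>\<^sub>M lborel))
      = (\<integral>\<^sup>+x. \<integral>\<^sup>+y. ennreal (f x * h y) \<partial>lborel \<partial>lborel)"
    using lborel.nn_integral_fst[OF m] by simp
  also have "\<dots> = (\<integral>\<^sup>+x. ennreal (f x) * \<integral>\<^sup>+y. ennreal (h y) \<partial>lborel \<partial>lborel)"
    using f0 h0 by (intro nn_integral_cong) (simp add: ennreal_mult nn_integral_cmult)
  also have "\<dots> = (\<integral>\<^sup>+x. ennreal (f x) \<partial>lborel) * (\<integral>\<^sup>+y. ennreal (h y) \<partial>lborel)"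
    by (simp add: nn_integral_multc)
  finally show ?thesis .
qed

lemma nn_bound:
  fixes h :: "'a \<Rightarrow> real"
  assumes [measurable]: "h \<in> borel_measurable M" and h0: "\<And>x. 0 \<le> h x"
    and b: "(\<integral>\<^sup>+x. ennreal (h x) \<partial>M) \<le> ennreal b" and b0: "0 \<le> b"
  shows "integrable M h" "integral\<^sup>L M h \<le> b"
proof -
  have fin: "(\<integral>\<^sup>+x. ennreal (h x) \<partial>M) < \<infinity>" using b by (simp add: le_less_trans)
  show "integrable M h" using fin h0 by (intro integrableI_bounded) auto
  have "integral\<^sup>L M h = enn2real (\<integral>\<^sup>+x. ennreal (h x) \<partial>M)"
    using h0 by (intro integral_eq_nn_integral) auto
  also have "\<dots> \<le> b" using b b0 fin by (simp add: enn2real_leI)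
  finally show "integral\<^sup>L M h \<le> b" .
qed

lemma xlnx_ineq:
  fixes a b :: real assumes a: "0 \<le> a" and b: "0 < b"
  shows "a * ln a - b * ln b \<ge> (a - b) + (a - b) * ln b"
proof (cases "a = 0")
  case True then show ?thesis using b by simp
next
  case False
  then have a': "0 < a" using a by simp
  have "ln (b / a) \<le> b / a - 1" using a' b by (intro ln_le_minus_one) auto
  then have "a * ln (b / a) \<le> a * (b / a - 1)" using a' by (intro mult_left_mono) auto
  also have "a * (b / a - 1) = b - a" using a' by (simp add: field_simps)
  finally have "a * (ln b - ln a) \<le> b - a" using a' b by (simp add: ln_div)
  then show ?thesis by (simp add: algebra_simps)
qed

lemma ln_tangent:
  fixes y l :: real assumes "0 < y" "0 < l"
  shows "ln y \<le> l * y - 1 - ln l"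
proof -
  have "ln (l * y) \<le> l * y - 1" using assms by (intro ln_le_minus_one) auto
  then show ?thesis using assms by (simp add: ln_mult)
qed

locale setting =
  fixes V :: "real^'n \<Rightarrow> real" and L a V0 :: real
  assumes Lpos: "L > 0" and Vmeas: "V \<in> borel_measurable lborel" and Vint: "integrable lborel V"
    and V0: "AE x in lborel. -V0 \<le> V x" and V0nn: "0 \<le> V0" and Veven: "\<And>x. V (-x) = V x"
    and Vsupp: "\<And>x. norm x > a \<Longrightarrow> V x = 0" and apos: "0 < a" and aL: "a < L/2"
begin

lemma Vmeas'[measurable]: "V \<in> borel_measurable borel"
  using Vmeas by simp

definition Q :: "real^'n \<Rightarrow> real" where
  "Q z = (\<Sum>k\<in>FF. V (z - L *\<^sub>R k))"

lemma Q_meas[measurable]: "Q \<in> borel_measurable borel"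
  unfolding Q_def by measurable

lemma periodize_Q:
  assumes x: "x \<in> cube L" and y: "y \<in> cube L"
  shows "periodize L V (x - y) = Q (x - y)"
proof -
  have "infsum (\<lambda>k. V (x - y - L *\<^sub>R k)) lattice = infsum (\<lambda>k. V (x - y - L *\<^sub>R k)) FF"
  proof (rule infsum_cong_neutral)
    fix k :: "real^'n" assume "k \<in> FF - lattice" then show "V (x - y - L *\<^sub>R k) = 0" by (auto simp: FF_def)
  next
    fix k :: "real^'n" assume k: "k \<in> lattice - FF"
    then obtain i where i: "\<bar>k $ i\<bar> > 1" by (auto simp: FF_def not_le)
    from k have "k $ i \<in> \<int>" by (auto simp: lattice_def)
    then obtain z :: int where z: "k $ i = of_int z" by (auto elim: Ints_cases)
    with i have "\<bar>z\<bar> > 1" by (metis of_int_abs of_int_less_iff of_int_1)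
    then have "\<bar>z\<bar> \<ge> 2" by linarith
    then have k2: "\<bar>k $ i\<bar> \<ge> 2" using z by (metis of_int_abs of_int_le_iff of_int_numeral)
    have "0 \<le> x$i" "x$i<L" "0\<le>y$i" "y$i<L" using x y by (auto simp: cube_def)
    then have d: "\<bar>x $ i - y $ i\<bar> < L" unfolding abs_less_iff by linarith
    have "L * 2 \<le> L * \<bar>k $ i\<bar>" using k2 Lpos by (intro mult_left_mono) auto
    then have "\<bar>L * k $ i\<bar> \<ge> 2 * L" using Lpos by (simp add: abs_mult)
    then have "\<bar>(x - y - L *\<^sub>R k) $ i\<bar> > L" using d by (simp add: abs_le_iff abs_less_iff) linarith
    then have "norm (x - y - L *\<^sub>R k) > a"
      using component_le_norm_cart[of "x - y - L *\<^sub>R k" i] aL apos by linarith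
    then show "V (x - y - L *\<^sub>R k) = 0" by (rule Vsupp)
  qed (auto simp: FF_def)
  also have "\<dots> = (\<Sum>k\<in>FF. V (x - y - L *\<^sub>R k))" by (rule infsum_finite[OF finite_FF])
  finally show ?thesis unfolding periodize_def Q_def .
qed

lemma V_shift_AE: fixes c :: "real^'n" shows "AE y in lborel. -V0 \<le> V (c + y)"
proof -
  have "AE z in distr lborel borel ((+) c). -V0 \<le> V z" using V0 unfolding lborel_distr_plus .
  then show ?thesis by (subst (asm) AE_distr_iff) auto
qed

lemma Q_lower: "AE p in lborel \<Otimes>\<^sub>M lborel. - (real (card (FF::(real^'n) set)) * V0) \<le> Q (fst p - snd p)"
proof -
  have "AE p in lborel \<Otimes>\<^sub>M lborel. \<forall>k\<in>FF. -V0 \<le> V (fst p - snd p - L *\<^sub>R k)"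
  proof (rule lborel_pair.AE_pair_measure)
    show "{p \<in> space (lborel \<Otimes>\<^sub>M lborel). \<forall>k\<in>FF. -V0 \<le> V (fst p - snd p - L *\<^sub>R k)} \<in> sets (lborel \<Otimes>\<^sub>M lborel)"
      using finite_FF by measurable
    show "AE x in lborel. AE y in lborel. \<forall>k\<in>FF. -V0 \<le> V (fst (x, y) - snd (x, y) - L *\<^sub>R k)"
    proof (rule AE_I2)
      fix x
      have "\<forall>k\<in>FF. AE y in lborel. -V0 \<le> V (x - y - L *\<^sub>R k)"
      proof
        fix k
        have "AE y in lborel. -V0 \<le> V ((L *\<^sub>R k - x) + y)" by (rule V_shift_AE)
        moreover have "\<And>y. V (x - y - L *\<^sub>R k) = V ((L *\<^sub>R k - x) + y)"
          by (metis Veven minus_diff_eq diff_diff_eq2 add.commute diff_add_eq)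
        ultimately show "AE y in lborel. -V0 \<le> V (x - y - L *\<^sub>R k)" by simp
      qed
      then show "AE y in lborel. \<forall>k\<in>FF. -V0 \<le> V (fst (x, y) - snd (x, y) - L *\<^sub>R k)"
        using finite_FF by (intro AE_finite_allI) auto
    qed
  qed
  then show ?thesis
  proof (rule eventually_mono)
    fix p :: "(real^'n) \<times> (real^'n)"
    assume "\<forall>k\<in>FF. -V0 \<le> V (fst p - snd p - L *\<^sub>R k)"
    then have "(\<Sum>k\<in>(FF::(real^'n) set). -V0) \<le> Q (fst p - snd p)" unfolding Q_def by (intro sum_mono) auto
    then show "- (real (card (FF::(real^'n) set)) * V0) \<le> Q (fst p - snd p)" by simp
  qed
qed

definition N1 :: real where "N1 = (\<integral>z. \<bar>V z\<bar> \<partial>lborel)"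
definition W :: real where "W = real (card (FF::(real^'n) set)) * N1"

lemma N1_nn: "0 \<le> N1" unfolding N1_def by simp
lemma W_nn: "0 \<le> W" unfolding W_def using N1_nn by simp

lemma nnV: "(\<integral>\<^sup>+z. ennreal \<bar>V z\<bar> \<partial>lborel) = ennreal N1"
  unfolding N1_def using Vint by (intro nn_integral_eq_integral) auto

lemma nnV_shift: fixes c :: "real^'n" shows "(\<integral>\<^sup>+y. ennreal \<bar>V (c + y)\<bar> \<partial>lborel) = ennreal N1"
proof -
  have "(\<integral>\<^sup>+y. ennreal \<bar>V (c + y)\<bar> \<partial>lborel) = (\<integral>\<^sup>+z. ennreal \<bar>V z\<bar> \<partial>distr lborel borel ((+) c))"
    by (subst nn_integral_distr) auto
  also have "\<dots> = ennreal N1" unfolding lborel_distr_plus by (rule nnV)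
  finally show ?thesis .
qed

lemma Q_abs: "ennreal \<bar>Q z\<bar> \<le> (\<Sum>k\<in>(FF::(real^'n) set). ennreal \<bar>V (z - L *\<^sub>R k)\<bar>)"
proof -
  have "\<bar>Q z\<bar> \<le> (\<Sum>k\<in>(FF::(real^'n) set). \<bar>V (z - L *\<^sub>R k)\<bar>)" unfolding Q_def by (rule sum_abs)
  then show ?thesis by (subst sum_ennreal) (auto intro: ennreal_leI)
qed

lemma Q_int_gen:
  assumes "\<And>k y. V (g y - L *\<^sub>R k) = V (c k + y)"
  shows "(\<integral>\<^sup>+y. ennreal \<bar>Q (g y)\<bar> \<partial>lborel) \<le> ennreal W"
proof -
  have "(\<integral>\<^sup>+y. ennreal \<bar>Q (g y)\<bar> \<partial>lborel) \<le> (\<integral>\<^sup>+y. (\<Sum>k\<in>(FF::(real^'n) set). ennreal \<bar>V (g y - L *\<^sub>R k)\<bar>) \<partial>lborel)"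
    by (intro nn_integral_mono) (metis Q_abs)
  also have "\<dots> = (\<Sum>k\<in>(FF::(real^'n) set). (\<integral>\<^sup>+y. ennreal \<bar>V (g y - L *\<^sub>R k)\<bar> \<partial>lborel))"
    by (intro nn_integral_sum) (simp add: assms)
  also have "\<dots> = (\<Sum>k\<in>(FF::(real^'n) set). ennreal N1)"
    by (intro sum.cong refl) (simp add: assms nnV_shift)
  also have "\<dots> = ennreal W" unfolding W_def using N1_nn by (simp add: ennreal_mult ennreal_of_nat_eq_real_of_nat)
  finally show ?thesis .
qed

lemma Q_int_y: "(\<integral>\<^sup>+y. ennreal \<bar>Q (x - y)\<bar> \<partial>lborel) \<le> ennreal W"
proof (rule Q_int_gen[where c="\<lambda>k. L *\<^sub>R k - x"])
  fix k y
  have "x - y - L *\<^sub>R k = - ((L *\<^sub>R k - x) + y)" by (simp add: algebra_simps)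
  then show "V (x - y - L *\<^sub>R k) = V ((L *\<^sub>R k - x) + y)" by (metis Veven)
qed

lemma Q_int_x: "(\<integral>\<^sup>+x. ennreal \<bar>Q (x - y)\<bar> \<partial>lborel) \<le> ennreal W"
proof (rule Q_int_gen[where c="\<lambda>k. - y - L *\<^sub>R k"])
  fix k x
  show "V (x - y - L *\<^sub>R k) = V ((- y - L *\<^sub>R k) + x)" by (simp add: algebra_simps)
qed

lemma prod_Q1:
  assumes [measurable]: "f \<in> borel_measurable lborel" and f0: "\<And>x. 0 \<le> f x"
  shows "(\<integral>\<^sup>+p. ennreal (\<bar>Q (fst p - snd p)\<bar> * f (fst p)) \<partial>(lborel \<Otimes>\<^sub>M lborel))
    \<le> ennreal W * (\<integral>\<^sup>+x. ennreal (f x) \<partial>lborel)"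
proof -
  have m: "(\<lambda>p. ennreal (\<bar>Q (fst p - snd p)\<bar> * f (fst p))) \<in> borel_measurable (lborel \<Otimes>\<^sub>M lborel)"
    by measurable
  have "(\<integral>\<^sup>+p. ennreal (\<bar>Q (fst p - snd p)\<bar> * f (fst p)) \<partial>(lborel \<Otimes>\<^sub>M lborel))
      = (\<integral>\<^sup>+x. \<integral>\<^sup>+y. ennreal (\<bar>Q (x - y)\<bar> * f x) \<partial>lborel \<partial>lborel)"
    using lborel.nn_integral_fst[OF m] by simp
  also have "\<dots> = (\<integral>\<^sup>+x. ennreal (f x) * \<integral>\<^sup>+y. ennreal \<bar>Q (x - y)\<bar> \<partial>lborel \<partial>lborel)"
    using f0 by (intro nn_integral_cong) (simp add: ennreal_mult' nn_integral_cmult mult.commute)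
  also have "\<dots> \<le> (\<integral>\<^sup>+x. ennreal (f x) * ennreal W \<partial>lborel)"
    by (intro nn_integral_mono mult_left_mono Q_int_y) auto
  also have "\<dots> = ennreal W * (\<integral>\<^sup>+x. ennreal (f x) \<partial>lborel)"
    by (subst mult.commute) (simp add: nn_integral_cmult)
  finally show ?thesis .
qed

lemma prod_Q2:
  assumes [measurable]: "f \<in> borel_measurable lborel" and f0: "\<And>x. 0 \<le> f x"
  shows "(\<integral>\<^sup>+p. ennreal (\<bar>Q (fst p - snd p)\<bar> * f (snd p)) \<partial>(lborel \<Otimes>\<^sub>M lborel))
    \<le> ennreal W * (\<integral>\<^sup>+x. ennreal (f x) \<partial>lborel)"
proof -
  have m: "(\<lambda>p. ennreal (\<bar>Q (fst p - snd p)\<bar> * f (snd p))) \<in> borel_measurable (lborel \<Otimes>\<^sub>M lborel)"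
    by measurable
  have "(\<integral>\<^sup>+p. ennreal (\<bar>Q (fst p - snd p)\<bar> * f (snd p)) \<partial>(lborel \<Otimes>\<^sub>M lborel))
      = (\<integral>\<^sup>+y. \<integral>\<^sup>+x. ennreal (\<bar>Q (x - y)\<bar> * f y) \<partial>lborel \<partial>lborel)"
    using lborel_pair.nn_integral_snd[OF m] by simp
  also have "\<dots> = (\<integral>\<^sup>+y. ennreal (f y) * \<integral>\<^sup>+x. ennreal \<bar>Q (x - y)\<bar> \<partial>lborel \<partial>lborel)"
    using f0 by (intro nn_integral_cong) (subst nn_integral_cmult[symmetric], measurable, simp add: ennreal_mult mult.commute)
  also have "\<dots> \<le> (\<integral>\<^sup>+y. ennreal (f y) * ennreal W \<partial>lborel)"
    by (intro nn_integral_mono mult_left_mono Q_int_x) auto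
  also have "\<dots> = ennreal W * (\<integral>\<^sup>+x. ennreal (f x) \<partial>lborel)"
    by (subst mult.commute) (simp add: nn_integral_cmult)
  finally show ?thesis .
qed

definition C :: "(real^'n) set" where "C = cube L"

lemma C_sets[measurable]: "C \<in> sets lborel" "C \<in> sets borel" unfolding C_def by simp_all

lemma C_meas: "0 < emeasure lborel C" "emeasure lborel C < \<infinity>"
  unfolding C_def using cube_emeasure[OF Lpos] by auto

definition EG :: "(real^'n \<Rightarrow> real) \<Rightarrow> (real^'n) \<times> (real^'n) \<Rightarrow> real" where
  "EG f p = indicator C (fst p) * indicator C (snd p) * (Q (fst p - snd p) * f (fst p) * f (snd p))"

lemma energy_EG:
  "energy L V f = (if integrable (lborel \<Otimes>\<^sub>M lborel) (EG f) then ereal (integral\<^sup>L (lborel \<Otimes>\<^sub>M lborel) (EG f)) else \<infinity>)"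
proof -
  have eq: "(\<lambda>p. indicator (cube L \<times> cube L) p *\<^sub>R (case p of (x, y) \<Rightarrow> periodize L V (x - y) * f x * f y)) = EG f"
  proof
    fix p :: "(real^'n) \<times> (real^'n)"
    obtain x y where p: "p = (x, y)" by (cases p)
    show "indicator (cube L \<times> cube L) p *\<^sub>R (case p of (x, y) \<Rightarrow> periodize L V (x - y) * f x * f y) = EG f p"
      unfolding p EG_def C_def
      by (cases "x \<in> cube L \<and> y \<in> cube L") (auto simp: periodize_Q indicator_times split: split_indicator)
  qed
  show ?thesis unfolding energy_def Let_def set_integrable_def set_lebesgue_integral_def eq ..
qed

end


locale step = setting V L a V0 for V :: "real^'n \<Rightarrow> real" and L a V0 +
  fixes \<rho> :: "real^'n \<Rightarrow> real" and M :: real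
  assumes rho: "\<rho> \<in> densities L" and Mpos: "0 < M" and big: "0 < emeasure lborel {x \<in> C. M < \<rho> x}"
begin

lemma rho_meas[measurable]: "\<rho> \<in> borel_measurable borel" using rho by (simp add: densities_def)
lemma rho_nn: "0 \<le> \<rho> x" using rho by (simp add: densities_def)
lemma rho_int: "integrable lborel (\<lambda>x. indicator C x * \<rho> x)"
  using rho by (simp add: densities_def C_def set_integrable_def)
lemma rho_one: "(\<integral>x. indicator C x * \<rho> x \<partial>lborel) = 1"
  using rho by (simp add: densities_def C_def set_lebesgue_integral_def)

definition ell :: real where "ell = measure lborel C"
lemma emC: "emeasure lborel C = ennreal ell" and ell_pos: "0 < ell"
proof -
  show "emeasure lborel C = ennreal ell" unfolding ell_def using C_meas by (simp add: emeasure_eq_ennreal_measure)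
  then show "0 < ell" unfolding ell_def using C_meas by simp
qed

definition tau :: "real^'n \<Rightarrow> real" where "tau x = min (\<rho> x) M"
definition sx :: "real^'n \<Rightarrow> real" where "sx x = max (\<rho> x - M) 0"
lemma tau_meas[measurable]: "tau \<in> borel_measurable borel" unfolding tau_def by measurable
lemma sx_meas[measurable]: "sx \<in> borel_measurable borel" unfolding sx_def by measurable
lemma tau_sx: "\<rho> x = tau x + sx x" unfolding tau_def sx_def by auto
lemma tau_nn: "0 \<le> tau x" "tau x \<le> \<rho> x" "tau x \<le> M" unfolding tau_def using rho_nn Mpos by auto
lemma sx_nn: "0 \<le> sx x" "sx x \<le> \<rho> x" unfolding sx_def using rho_nn Mpos by auto

lemma tau_int: "integrable lborel (\<lambda>x. indicator C x * tau x)"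
  by (rule Bochner_Integration.integrable_bound[OF rho_int]) (auto simp: tau_nn rho_nn split: split_indicator)
lemma sx_int: "integrable lborel (\<lambda>x. indicator C x * sx x)"
  by (rule Bochner_Integration.integrable_bound[OF rho_int]) (auto simp: sx_nn rho_nn split: split_indicator)
lemma C_int: "integrable lborel (indicator C :: _ \<Rightarrow> real)"
  using C_meas by simp
lemma C_integral: "(\<integral>x. indicator C x \<partial>lborel) = ell"
  unfolding ell_def by simp

definition mm :: real where "mm = (\<integral>x. indicator C x * sx x \<partial>lborel)"

lemma tau_mm: "(\<integral>x. indicator C x * tau x \<partial>lborel) + mm = 1"
proof -
  have "(\<integral>x. indicator C x * tau x \<partial>lborel) + mm = (\<integral>x. indicator C x * tau x + indicator C x * sx x \<partial>lborel)"
    unfolding mm_def using tau_int sx_int by simp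
  also have "\<dots> = (\<integral>x. indicator C x * \<rho> x \<partial>lborel)" by (simp add: tau_sx distrib_left)
  finally show ?thesis using rho_one by simp
qed

lemma mm_pos: "0 < mm"
proof (rule ccontr)
  assume "\<not> 0 < mm"
  moreover have "0 \<le> mm" unfolding mm_def by (intro integral_nonneg_AE) (auto simp: sx_nn)
  ultimately have "mm = 0" by simp
  then have "AE x in lborel. indicator C x * sx x = 0"
    unfolding mm_def using sx_int by (subst (asm) integral_nonneg_eq_0_iff_AE) (auto simp: sx_nn)
  then obtain N where N: "{x \<in> space lborel. \<not> indicator C x * sx x = 0} \<subseteq> N" "emeasure lborel N = 0" "N \<in> sets lborel"
    by (auto elim: AE_E)
  have "{x \<in> C. M < \<rho> x} \<subseteq> N" using N(1) by (auto simp: sx_def)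
  then have "emeasure lborel {x \<in> C. M < \<rho> x} \<le> emeasure lborel N" using N(3) by (intro emeasure_mono) auto
  then show False using big N(2) by simp
qed

lemma mm_le1: "mm \<le> 1"
proof -
  have "0 \<le> (\<integral>x. indicator C x * tau x \<partial>lborel)" by (intro integral_nonneg_AE) (auto simp: tau_nn)
  then show ?thesis using tau_mm by simp
qed

definition uu :: real where "uu = mm / ell"
lemma uu_pos: "0 < uu" unfolding uu_def using mm_pos ell_pos by simp
lemma uu_ell: "uu * ell = mm" unfolding uu_def using ell_pos by simp

definition rho2 :: "real^'n \<Rightarrow> real" where "rho2 x = tau x + uu"
lemma rho2_meas[measurable]: "rho2 \<in> borel_measurable borel" unfolding rho2_def by measurable
lemma rho2_bounds: "uu \<le> rho2 x" "rho2 x \<le> M + uu" "0 < rho2 x"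
  unfolding rho2_def using tau_nn[of x] uu_pos by auto
lemma rho2_int: "integrable lborel (\<lambda>x. indicator C x * rho2 x)"
proof -
  have "integrable lborel (\<lambda>x. indicator C x * tau x + indicator C x * uu)"
  proof (rule Bochner_Integration.integrable_add[OF tau_int])
    show "integrable lborel (\<lambda>x. indicator C x * uu)" using C_int by auto
  qed
  then show ?thesis unfolding rho2_def distrib_left .
qed
lemma rho2_one: "(\<integral>x. indicator C x * rho2 x \<partial>lborel) = 1"
proof -
  have "(\<integral>x. indicator C x * rho2 x \<partial>lborel) = (\<integral>x. indicator C x * tau x \<partial>lborel) + (\<integral>x. uu * indicator C x \<partial>lborel)"
    unfolding rho2_def distrib_left using tau_int C_int by (simp add: mult.commute)
  also have "\<dots> = 1" using tau_mm C_integral uu_ell by simp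
  finally show ?thesis .
qed

lemma rho2_dens: "rho2 \<in> densities L"
proof -
  have per: "\<rho> (x + L *\<^sub>R k) = \<rho> x" if "k \<in> lattice" for x k using rho that by (simp add: densities_def)
  show ?thesis
    unfolding densities_def using rho2_int rho2_one rho2_bounds(3)
    by (auto simp: rho2_def tau_def per C_def set_integrable_def set_lebesgue_integral_def less_imp_le)
qed

definition K1 :: real where "K1 = (M + uu) * (\<bar>ln uu\<bar> + \<bar>ln (M + uu)\<bar>)"

lemma K1_nn: "0 \<le> K1" unfolding K1_def using Mpos uu_pos by simp

lemma C_content: "Henstock_Kurzweil_Integration.content C = ell" unfolding ell_def by simp

lemma phi2_bound: "\<bar>rho2 x * ln (rho2 x)\<bar> \<le> K1"
proof -
  have b: "uu \<le> rho2 x" "rho2 x \<le> M + uu" "0 < rho2 x" by (rule rho2_bounds)+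
  have "ln uu \<le> ln (rho2 x)" "ln (rho2 x) \<le> ln (M + uu)" using b uu_pos by auto
  then have l: "\<bar>ln (rho2 x)\<bar> \<le> \<bar>ln uu\<bar> + \<bar>ln (M + uu)\<bar>" by linarith
  have "\<bar>rho2 x * ln (rho2 x)\<bar> = rho2 x * \<bar>ln (rho2 x)\<bar>" using b by (simp add: abs_mult)
  also have "\<dots> \<le> (M + uu) * (\<bar>ln uu\<bar> + \<bar>ln (M + uu)\<bar>)" using b l by (intro mult_mono) auto
  finally show ?thesis unfolding K1_def .
qed

lemma phi2_int: "integrable lborel (\<lambda>x. indicator C x * (rho2 x * ln (rho2 x)))"
proof (rule Bochner_Integration.integrable_bound)
  show "integrable lborel (\<lambda>x. K1 * indicator C x)" using C_int by auto
  show "AE x in lborel. norm (indicator C x * (rho2 x * ln (rho2 x))) \<le> norm (K1 * indicator C x)"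
    using phi2_bound K1_nn by (intro AE_I2) (auto split: split_indicator)
qed measurable

lemma entropy_rho2: "entropy L rho2 = ereal (\<integral>x. indicator C x * (rho2 x * ln (rho2 x)) \<partial>lborel)"
  using phi2_int by (simp add: entropy_def C_def set_integrable_def set_lebesgue_integral_def)

lemma entropy_ineq:
  assumes int: "integrable lborel (\<lambda>x. indicator C x * (\<rho> x * ln (\<rho> x)))"
  shows "(\<integral>x. indicator C x * (\<rho> x * ln (\<rho> x)) \<partial>lborel) - (\<integral>x. indicator C x * (rho2 x * ln (rho2 x)) \<partial>lborel)
    \<ge> mm * (ln M + ln ell)"
proof -
  define h where "h x = (\<rho> x - rho2 x) + sx x * ln M + uu * (1 + ln ell) - uu * ell * rho2 x" for x
  have pw: "\<rho> x * ln (\<rho> x) - rho2 x * ln (rho2 x) \<ge> h x" for x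
  proof -
    have b: "0 < rho2 x" by (rule rho2_bounds)
    have 1: "\<rho> x * ln (\<rho> x) - rho2 x * ln (rho2 x) \<ge> (\<rho> x - rho2 x) + (\<rho> x - rho2 x) * ln (rho2 x)"
      using xlnx_ineq[OF rho_nn b] .
    have d: "\<rho> x - rho2 x = sx x - uu" unfolding rho2_def using tau_sx[of x] by simp
    have 2: "sx x * ln (rho2 x) \<ge> sx x * ln M"
    proof (cases "sx x = 0")
      case False
      then have "M < \<rho> x" unfolding sx_def by auto
      then have "rho2 x = M + uu" unfolding rho2_def tau_def by simp
      then have "ln M \<le> ln (rho2 x)" using Mpos uu_pos by simp
      then show ?thesis using sx_nn[of x] by (intro mult_left_mono) auto
    qed simp
    have 3: "ln (rho2 x) \<le> ell * rho2 x - 1 - ln ell" using ln_tangent[OF b ell_pos] .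
    have "uu * ln (rho2 x) \<le> uu * (ell * rho2 x - 1 - ln ell)" using 3 uu_pos by (intro mult_left_mono) auto
    then show ?thesis using 1 2 unfolding d h_def by (simp add: algebra_simps)
  qed
  have hint: "integrable lborel (\<lambda>x. indicator C x * h x)"
  proof -
    have eq: "(\<lambda>x. indicator C x * h x) = (\<lambda>x. (indicator C x * \<rho> x - indicator C x * rho2 x) +
       (ln M * (indicator C x * sx x) + (uu * (1 + ln ell) * indicator C x - uu * ell * (indicator C x * rho2 x))))"
      by (auto simp: h_def algebra_simps fun_eq_iff)
    show ?thesis unfolding eq using rho_int rho2_int sx_int C_int by auto
  qed
  have hval: "(\<integral>x. indicator C x * h x \<partial>lborel) = mm * (ln M + ln ell)"
  proof -
    have eq: "(\<lambda>x. indicator C x * h x) = (\<lambda>x. (indicator C x * \<rho> x - indicator C x * rho2 x) +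
       (ln M * (indicator C x * sx x) + (uu * (1 + ln ell) * indicator C x - uu * ell * (indicator C x * rho2 x))))"
      by (auto simp: h_def algebra_simps fun_eq_iff)
    have "(\<integral>x. indicator C x * h x \<partial>lborel) = (1 - 1) + (ln M * mm + (uu * (1 + ln ell) * ell - uu * ell * 1))"
      unfolding eq using rho_int rho2_int sx_int C_int
      by (simp add: Bochner_Integration.integral_add Bochner_Integration.integral_diff rho_one rho2_one C_integral C_content mm_def[symmetric])
    also have "\<dots> = mm * (ln M + ln ell)" using uu_ell by (simp add: algebra_simps)
    finally show ?thesis .
  qed
  have "(\<integral>x. indicator C x * h x \<partial>lborel) \<le> (\<integral>x. indicator C x * (\<rho> x * ln (\<rho> x)) - indicator C x * (rho2 x * ln (rho2 x)) \<partial>lborel)"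
    using hint int phi2_int pw by (intro integral_mono) (auto simp: split: split_indicator)
  also have "\<dots> = (\<integral>x. indicator C x * (\<rho> x * ln (\<rho> x)) \<partial>lborel) - (\<integral>x. indicator C x * (rho2 x * ln (rho2 x)) \<partial>lborel)"
    using int phi2_int by simp
  finally show ?thesis using hval by simp
qed

lemma EG_meas[measurable]: assumes [measurable]: "f \<in> borel_measurable borel"
  shows "EG f \<in> borel_measurable (lborel \<Otimes>\<^sub>M lborel)"
  unfolding EG_def by measurable

lemma nn_rho: "(\<integral>\<^sup>+x. ennreal (indicator C x * \<rho> x) \<partial>lborel) = ennreal 1"
  using rho_int rho_one by (subst nn_integral_eq_integral) (auto simp: rho_nn)
lemma nn_rho2: "(\<integral>\<^sup>+x. ennreal (indicator C x * rho2 x) \<partial>lborel) = ennreal 1"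
  using rho2_int rho2_one rho2_bounds by (subst nn_integral_eq_integral) (auto intro!: AE_I2 simp: less_imp_le)
lemma nn_sx: "(\<integral>\<^sup>+x. ennreal (indicator C x * sx x) \<partial>lborel) = ennreal mm"
  using sx_int unfolding mm_def by (subst nn_integral_eq_integral) (auto simp: sx_nn)
lemma nn_C: "(\<integral>\<^sup>+x. ennreal (indicator C x * c) \<partial>lborel) = ennreal (c * ell)" if "0 \<le> c"
proof -
  have "integrable lborel (\<lambda>x. indicator C x * c)" using C_int by auto
  then show ?thesis using that by (subst nn_integral_eq_integral) (auto simp: C_integral C_content mult.commute)
qed

lemma EG_rho2_int: "integrable (lborel \<Otimes>\<^sub>M lborel) (EG rho2)"
proof (rule integrableI_bounded)
  show "EG rho2 \<in> borel_measurable (lborel \<Otimes>\<^sub>M lborel)" by measurable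
  define c where "c = (M + uu)^2"
  have c0: "0 \<le> c" unfolding c_def by simp
  have "(\<integral>\<^sup>+p. ennreal (norm (EG rho2 p)) \<partial>(lborel \<Otimes>\<^sub>M lborel))
      \<le> (\<integral>\<^sup>+p. ennreal (\<bar>Q (fst p - snd p)\<bar> * (indicator C (fst p) * c)) \<partial>(lborel \<Otimes>\<^sub>M lborel))"
  proof (intro nn_integral_mono ennreal_leI)
    fix p :: "(real^'n) \<times> (real^'n)"
    have "rho2 (fst p) * rho2 (snd p) \<le> (M + uu) * (M + uu)"
      using rho2_bounds Mpos uu_pos by (intro mult_mono) (auto simp: less_imp_le)
    then have *: "\<bar>Q (fst p - snd p)\<bar> * (rho2 (fst p) * rho2 (snd p)) \<le> \<bar>Q (fst p - snd p)\<bar> * c"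
      unfolding c_def power2_eq_square by (rule mult_left_mono) simp
    have ab: "\<bar>rho2 (fst p)\<bar> = rho2 (fst p)" "\<bar>rho2 (snd p)\<bar> = rho2 (snd p)"
      using rho2_bounds(3) by (auto intro: abs_of_pos)
    have "norm (EG rho2 p) = indicator C (fst p) * indicator C (snd p) * (\<bar>Q (fst p - snd p)\<bar> * (rho2 (fst p) * rho2 (snd p)))"
      unfolding EG_def by (simp add: abs_mult ab split: split_indicator)
    also have "\<dots> \<le> indicator C (fst p) * indicator C (snd p) * (\<bar>Q (fst p - snd p)\<bar> * c)"
      using * by (rule mult_left_mono) auto
    also have "\<dots> \<le> \<bar>Q (fst p - snd p)\<bar> * (indicator C (fst p) * c)"
      using c0 by (auto split: split_indicator)
    finally show "norm (EG rho2 p) \<le> \<bar>Q (fst p - snd p)\<bar> * (indicator C (fst p) * c)" .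
  qed
  also have "\<dots> \<le> ennreal W * (\<integral>\<^sup>+x. ennreal (indicator C x * c) \<partial>lborel)"
    using c0 by (intro prod_Q1) auto
  also have "\<dots> < \<infinity>" using c0 by (simp add: nn_C ennreal_mult_less_top)
  finally show "(\<integral>\<^sup>+p. ennreal (norm (EG rho2 p)) \<partial>(lborel \<Otimes>\<^sub>M lborel)) < \<infinity>" .
qed

lemma energy_ineq:
  assumes int: "integrable (lborel \<Otimes>\<^sub>M lborel) (EG \<rho>)"
  shows "integral\<^sup>L (lborel \<Otimes>\<^sub>M lborel) (EG \<rho>) - integral\<^sup>L (lborel \<Otimes>\<^sub>M lborel) (EG rho2)
    \<ge> - (mm * (2 * real (card (FF::(real^'n) set)) * V0 + 2 * W / ell))"
proof -
  define cF where "cF = real (card (FF::(real^'n) set))"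
  have cF0: "0 \<le> cF" unfolding cF_def by simp
  define r where "r p = indicator C (fst p) * indicator C (snd p) * (\<rho> (fst p) * \<rho> (snd p) - tau (fst p) * tau (snd p))" for p :: "(real^'n) \<times> (real^'n)"
  define q where "q p = indicator C (fst p) * indicator C (snd p) * (rho2 (fst p) * rho2 (snd p) - tau (fst p) * tau (snd p))" for p :: "(real^'n) \<times> (real^'n)"
  have r_meas[measurable]: "r \<in> borel_measurable (lborel \<Otimes>\<^sub>M lborel)" unfolding r_def by measurable
  have q_meas[measurable]: "q \<in> borel_measurable (lborel \<Otimes>\<^sub>M lborel)" unfolding q_def by measurable
  have r_nn: "0 \<le> r p" for p
  proof -
    have "tau (fst p) * tau (snd p) \<le> \<rho> (fst p) * \<rho> (snd p)"
      using tau_nn rho_nn by (intro mult_mono) auto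
    then show ?thesis unfolding r_def by auto
  qed
  have q_nn: "0 \<le> q p" for p
  proof -
    have "tau (fst p) * tau (snd p) \<le> rho2 (fst p) * rho2 (snd p)"
      using tau_nn uu_pos by (intro mult_mono) (auto simp: rho2_def)
    then show ?thesis unfolding q_def by auto
  qed
  define f1 where "f1 x = indicator C x * \<rho> x" for x :: "real^'n"
  define f2 where "f2 x = indicator C x * sx x" for x :: "real^'n"
  define f3 where "f3 x = indicator C x * rho2 x" for x :: "real^'n"
  have f_meas[measurable]: "f1 \<in> borel_measurable lborel" "f2 \<in> borel_measurable lborel" "f3 \<in> borel_measurable lborel"
    unfolding f1_def f2_def f3_def by measurable
  have f_nn: "0 \<le> f1 x" "0 \<le> f2 x" "0 \<le> f3 x" for x
    unfolding f1_def f2_def f3_def using rho_nn sx_nn rho2_bounds(3)[of x] by (auto simp: less_imp_le)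
  have r_bd: "r p \<le> f1 (fst p) * f2 (snd p) + f2 (fst p) * f1 (snd p)" for p
  proof -
    have e: "\<rho> (fst p) * \<rho> (snd p) - tau (fst p) * tau (snd p) = \<rho> (fst p) * sx (snd p) + sx (fst p) * tau (snd p)"
      using tau_sx[of "fst p"] tau_sx[of "snd p"] by (simp add: algebra_simps)
    have "sx (fst p) * tau (snd p) \<le> sx (fst p) * \<rho> (snd p)" using sx_nn tau_nn by (intro mult_left_mono) auto
    then show ?thesis unfolding r_def f1_def f2_def e by (auto split: split_indicator)
  qed
  have "(\<integral>\<^sup>+p. ennreal (r p) \<partial>(lborel \<Otimes>\<^sub>M lborel))
      \<le> (\<integral>\<^sup>+p. ennreal (f1 (fst p) * f2 (snd p)) + ennreal (f2 (fst p) * f1 (snd p)) \<partial>(lborel \<Otimes>\<^sub>M lborel))"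
  proof (rule nn_integral_mono)
    fix p :: "(real^'n) \<times> (real^'n)"
    have "ennreal (r p) \<le> ennreal (f1 (fst p) * f2 (snd p) + f2 (fst p) * f1 (snd p))"
      by (rule ennreal_leI) (rule r_bd)
    also have "\<dots> = ennreal (f1 (fst p) * f2 (snd p)) + ennreal (f2 (fst p) * f1 (snd p))"
      using f_nn by (intro ennreal_plus) auto
    finally show "ennreal (r p) \<le> ennreal (f1 (fst p) * f2 (snd p)) + ennreal (f2 (fst p) * f1 (snd p))" .
  qed
  also have "\<dots> = (\<integral>\<^sup>+p. ennreal (f1 (fst p) * f2 (snd p)) \<partial>(lborel \<Otimes>\<^sub>M lborel)) + (\<integral>\<^sup>+p. ennreal (f2 (fst p) * f1 (snd p)) \<partial>(lborel \<Otimes>\<^sub>M lborel))"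
    by (intro nn_integral_add) auto
  also have "\<dots> = ennreal 1 * ennreal mm + ennreal mm * ennreal 1"
    using f_nn unfolding prod_eq[OF f_meas(1,2) f_nn(1,2)] prod_eq[OF f_meas(2,1) f_nn(2,1)]
    unfolding f1_def f2_def nn_rho nn_sx by simp
  also have "\<dots> = ennreal mm + ennreal mm" by simp
  also have "\<dots> = ennreal (mm + mm)" using mm_pos by (intro ennreal_plus[symmetric]) auto
  also have "mm + mm = 2 * mm" by simp
  finally have r_nnb: "(\<integral>\<^sup>+p. ennreal (r p) \<partial>(lborel \<Otimes>\<^sub>M lborel)) \<le> ennreal (2 * mm)" .
  have r_int: "integrable (lborel \<Otimes>\<^sub>M lborel) r" and r_I: "integral\<^sup>L (lborel \<Otimes>\<^sub>M lborel) r \<le> 2 * mm"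
    using nn_bound[OF r_meas r_nn r_nnb] mm_pos by auto
  have qq_bd: "\<bar>Q (fst p - snd p)\<bar> * q p \<le> uu * (\<bar>Q (fst p - snd p)\<bar> * f3 (fst p)) + uu * (\<bar>Q (fst p - snd p)\<bar> * f3 (snd p))" for p
  proof -
    have e: "rho2 (fst p) * rho2 (snd p) - tau (fst p) * tau (snd p) = uu * tau (fst p) + uu * tau (snd p) + uu * uu"
      unfolding rho2_def by (simp add: algebra_simps)
    have "q p \<le> uu * f3 (fst p) + uu * f3 (snd p)"
      unfolding q_def f3_def e using uu_pos tau_nn by (auto simp: rho2_def algebra_simps split: split_indicator)
    then have "\<bar>Q (fst p - snd p)\<bar> * q p \<le> \<bar>Q (fst p - snd p)\<bar> * (uu * f3 (fst p) + uu * f3 (snd p))"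
      by (rule mult_left_mono) simp
    then show ?thesis by (simp add: algebra_simps)
  qed
  have qq_meas[measurable]: "(\<lambda>p. \<bar>Q (fst p - snd p)\<bar> * q p) \<in> borel_measurable (lborel \<Otimes>\<^sub>M lborel)" by measurable
  have qq_nn: "0 \<le> \<bar>Q (fst p - snd p)\<bar> * q p" for p using q_nn by simp
  have "(\<integral>\<^sup>+p. ennreal (\<bar>Q (fst p - snd p)\<bar> * q p) \<partial>(lborel \<Otimes>\<^sub>M lborel))
      \<le> (\<integral>\<^sup>+p. ennreal uu * ennreal (\<bar>Q (fst p - snd p)\<bar> * f3 (fst p)) + ennreal uu * ennreal (\<bar>Q (fst p - snd p)\<bar> * f3 (snd p)) \<partial>(lborel \<Otimes>\<^sub>M lborel))"
  proof (rule nn_integral_mono)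
    fix p :: "(real^'n) \<times> (real^'n)"
    have "ennreal (\<bar>Q (fst p - snd p)\<bar> * q p) \<le> ennreal (uu * (\<bar>Q (fst p - snd p)\<bar> * f3 (fst p)) + uu * (\<bar>Q (fst p - snd p)\<bar> * f3 (snd p)))"
      by (rule ennreal_leI) (rule qq_bd)
    also have "\<dots> = ennreal (uu * (\<bar>Q (fst p - snd p)\<bar> * f3 (fst p))) + ennreal (uu * (\<bar>Q (fst p - snd p)\<bar> * f3 (snd p)))"
      using f_nn uu_pos by (intro ennreal_plus) auto
    also have "\<dots> = ennreal uu * ennreal (\<bar>Q (fst p - snd p)\<bar> * f3 (fst p)) + ennreal uu * ennreal (\<bar>Q (fst p - snd p)\<bar> * f3 (snd p))"
      using uu_pos by (simp add: ennreal_mult')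
    finally show "ennreal (\<bar>Q (fst p - snd p)\<bar> * q p) \<le> ennreal uu * ennreal (\<bar>Q (fst p - snd p)\<bar> * f3 (fst p)) + ennreal uu * ennreal (\<bar>Q (fst p - snd p)\<bar> * f3 (snd p))" .
  qed
  also have "\<dots> = ennreal uu * (\<integral>\<^sup>+p. ennreal (\<bar>Q (fst p - snd p)\<bar> * f3 (fst p)) \<partial>(lborel \<Otimes>\<^sub>M lborel))
      + ennreal uu * (\<integral>\<^sup>+p. ennreal (\<bar>Q (fst p - snd p)\<bar> * f3 (snd p)) \<partial>(lborel \<Otimes>\<^sub>M lborel))"
    by (subst nn_integral_add) (auto simp: nn_integral_cmult)
  also have "\<dots> \<le> ennreal uu * (ennreal W * ennreal 1) + ennreal uu * (ennreal W * ennreal 1)"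
    using prod_Q1[OF f_meas(3) f_nn(3)] prod_Q2[OF f_meas(3) f_nn(3)] unfolding f3_def nn_rho2
    by (intro add_mono mult_left_mono) auto
  also have "\<dots> = ennreal (uu * W) + ennreal (uu * W)" using uu_pos W_nn by (simp add: ennreal_mult)
  also have "\<dots> = ennreal (uu * W + uu * W)" using uu_pos W_nn by (intro ennreal_plus[symmetric]) auto
  also have "uu * W + uu * W = 2 * uu * W" by simp
  finally have qq_nnb: "(\<integral>\<^sup>+p. ennreal (\<bar>Q (fst p - snd p)\<bar> * q p) \<partial>(lborel \<Otimes>\<^sub>M lborel)) \<le> ennreal (2 * uu * W)" .
  have qq_int: "integrable (lborel \<Otimes>\<^sub>M lborel) (\<lambda>p. \<bar>Q (fst p - snd p)\<bar> * q p)"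
    and qq_I: "(\<integral>p. \<bar>Q (fst p - snd p)\<bar> * q p \<partial>(lborel \<Otimes>\<^sub>M lborel)) \<le> 2 * uu * W"
    using nn_bound[OF qq_meas qq_nn qq_nnb] uu_pos W_nn by auto
  have AE: "AE p in lborel \<Otimes>\<^sub>M lborel. - (cF * V0) * r p - \<bar>Q (fst p - snd p)\<bar> * q p \<le> EG \<rho> p - EG rho2 p"
    using Q_lower
  proof (rule eventually_mono)
    fix p :: "(real^'n) \<times> (real^'n)"
    assume Ql: "- (real (card (FF::(real^'n) set)) * V0) \<le> Q (fst p - snd p)"
    have d: "EG \<rho> p - EG rho2 p = Q (fst p - snd p) * r p - Q (fst p - snd p) * q p"
      unfolding EG_def r_def q_def by (simp add: algebra_simps)
    have 1: "- (cF * V0) * r p \<le> Q (fst p - snd p) * r p" using Ql r_nn[of p] unfolding cF_def by (intro mult_right_mono) auto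
    have 2: "- (Q (fst p - snd p) * q p) \<ge> - (\<bar>Q (fst p - snd p)\<bar> * q p)"
      using q_nn[of p] by (simp add: mult_right_mono)
    show "- (cF * V0) * r p - \<bar>Q (fst p - snd p)\<bar> * q p \<le> EG \<rho> p - EG rho2 p" unfolding d using 1 2 by linarith
  qed
  have "integral\<^sup>L (lborel \<Otimes>\<^sub>M lborel) (\<lambda>p. - (cF * V0) * r p - \<bar>Q (fst p - snd p)\<bar> * q p)
      \<le> integral\<^sup>L (lborel \<Otimes>\<^sub>M lborel) (\<lambda>p. EG \<rho> p - EG rho2 p)"
    using r_int qq_int int EG_rho2_int AE by (intro integral_mono_AE) auto
  moreover have "integral\<^sup>L (lborel \<Otimes>\<^sub>M lborel) (\<lambda>p. - (cF * V0) * r p - \<bar>Q (fst p - snd p)\<bar> * q p)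
      = - (cF * V0) * integral\<^sup>L (lborel \<Otimes>\<^sub>M lborel) r - (\<integral>p. \<bar>Q (fst p - snd p)\<bar> * q p \<partial>(lborel \<Otimes>\<^sub>M lborel))"
    using r_int qq_int by simp
  moreover have "integral\<^sup>L (lborel \<Otimes>\<^sub>M lborel) (\<lambda>p. EG \<rho> p - EG rho2 p)
      = integral\<^sup>L (lborel \<Otimes>\<^sub>M lborel) (EG \<rho>) - integral\<^sup>L (lborel \<Otimes>\<^sub>M lborel) (EG rho2)"
    using int EG_rho2_int by simp
  moreover have "(cF * V0) * integral\<^sup>L (lborel \<Otimes>\<^sub>M lborel) r \<le> (cF * V0) * (2 * mm)"
    using r_I cF0 V0nn by (intro mult_left_mono) auto
  moreover have "2 * uu * W = mm * (2 * W / ell)" unfolding uu_def using ell_pos by simp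
  ultimately show ?thesis using qq_I unfolding cF_def by (simp add: algebra_simps)
qed

lemma entropy_eq: "entropy L \<rho> = (if integrable lborel (\<lambda>x. indicator C x * (\<rho> x * ln (\<rho> x)))
    then ereal (\<integral>x. indicator C x * (\<rho> x * ln (\<rho> x)) \<partial>lborel) else \<infinity>)"
  by (simp add: entropy_def C_def set_integrable_def set_lebesgue_integral_def)

lemma step_main:
  assumes c0: "0 \<le> c"
    and MK: "ln M + ln ell \<ge> c * (2 * real (card (FF::(real^'n) set)) * V0 + 2 * W / ell) + 1"
  shows "entropy L \<rho> + ereal c * energy L V \<rho> > entropy L rho2 + ereal c * energy L V rho2"
proof -
  define S2 where "S2 = (\<integral>x. indicator C x * (rho2 x * ln (rho2 x)) \<partial>lborel)"
  define E2 where "E2 = integral\<^sup>L (lborel \<Otimes>\<^sub>M lborel) (EG rho2)"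
  define K where "K = 2 * real (card (FF::(real^'n) set)) * V0 + 2 * W / ell"
  have K0: "0 \<le> K" unfolding K_def using V0nn W_nn ell_pos by simp
  have rhs: "entropy L rho2 + ereal c * energy L V rho2 = ereal (S2 + c * E2)"
    unfolding entropy_rho2 energy_EG S2_def E2_def using EG_rho2_int by simp
  show ?thesis
  proof (cases "integrable lborel (\<lambda>x. indicator C x * (\<rho> x * ln (\<rho> x)))")
    case False
    have "ereal c * energy L V \<rho> \<noteq> - \<infinity>"
      using c0 unfolding energy_EG by (auto simp: ereal_mult_infty)
    then have "entropy L \<rho> + ereal c * energy L V \<rho> = \<infinity>"
      unfolding entropy_eq using False by simp
    moreover have "entropy L rho2 + ereal c * energy L V rho2 < \<infinity>" unfolding rhs by simp
    ultimately show ?thesis by metis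
  next
    case intS: True
    define S where "S = (\<integral>x. indicator C x * (\<rho> x * ln (\<rho> x)) \<partial>lborel)"
    have Sd: "S - S2 \<ge> mm * (ln M + ln ell)" unfolding S_def S2_def by (rule entropy_ineq[OF intS])
    have "mm * (c * K + 1) \<le> mm * (ln M + ln ell)" using MK mm_pos unfolding K_def by (intro mult_left_mono) auto
    with Sd have Sd': "S - S2 \<ge> mm * (c * K + 1)" by linarith
    have ent: "entropy L \<rho> = ereal S" unfolding entropy_eq S_def using intS by simp
    show ?thesis
    proof (cases "integrable (lborel \<Otimes>\<^sub>M lborel) (EG \<rho>)")
      case intE: True
      define E where "E = integral\<^sup>L (lborel \<Otimes>\<^sub>M lborel) (EG \<rho>)"
      have Ed: "E - E2 \<ge> - (mm * K)" unfolding E_def E2_def K_def by (rule energy_ineq[OF intE])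
      have "c * (E - E2) \<ge> c * (- (mm * K))" using Ed c0 by (intro mult_left_mono) auto
      then have "S + c * E > S2 + c * E2" using Sd' mm_pos by (simp add: algebra_simps)
      moreover have "entropy L \<rho> + ereal c * energy L V \<rho> = ereal (S + c * E)"
        unfolding ent energy_EG E_def using intE by simp
      ultimately show ?thesis unfolding rhs by simp
    next
      case nintE: False
      show ?thesis
      proof (cases "c = 0")
        case True
        have "S > S2" using Sd' mm_pos True by simp
        moreover have "entropy L \<rho> + ereal c * energy L V \<rho> = ereal S"
          unfolding ent energy_EG using nintE True by simp
        ultimately show ?thesis unfolding rhs using True by simp
      next
        case False
        then have "entropy L \<rho> + ereal c * energy L V \<rho> = \<infinity>"
          unfolding ent energy_EG using nintE c0 by simp
        moreover have "entropy L rho2 + ereal c * energy L V rho2 < \<infinity>" unfolding rhs by simp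
        ultimately show ?thesis by metis
      qed
    qed
  qed
qed

end


theorem lemma2p1:
  fixes V :: "real^'n \<Rightarrow> real" and L a \<theta> :: real
  assumes "L > 0" and "V \<in> potential_class L a" and "\<theta> \<ge> 0"
  shows "\<exists>B0::real. \<forall>\<rho> \<in> densities L. sup_norm L \<rho> > ereal B0 \<longrightarrow>
           (\<exists>\<rho>' \<in> densities L. free_energy L V \<theta> \<rho> > free_energy L V \<theta> \<rho>')"
proof -
  from assms(2) have Vm: "V \<in> borel_measurable lborel" and Vi: "integrable lborel V"
    and ex: "\<exists>V0. AE x in lborel. -V0 \<le> V x" and ev: "\<And>x. V (-x) = V x"
    and sp: "\<And>x. norm x > a \<Longrightarrow> V x = 0" and a: "0 < a" "a < L/2"
    unfolding potential_class_def by auto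
  from ex obtain V1 where V1: "AE x in lborel. -V1 \<le> V x" by blast
  define V0 where "V0 = max V1 0"
  have V0: "AE x in lborel. -V0 \<le> V x" using V1 by (rule eventually_mono) (auto simp: V0_def)
  have V0nn: "0 \<le> V0" unfolding V0_def by simp
  interpret S: setting V L a V0
    using assms(1) Vm Vi V0 V0nn ev sp a by unfold_locales auto
  define c where "c = \<theta> * L ^ CARD('n) / 2"
  have c0: "0 \<le> c" using assms by (simp add: c_def)
  define ell where "ell = measure lborel S.C"
  define K where "K = 2 * real (card (FF::(real^'n) set)) * V0 + 2 * S.W / ell"
  define M where "M = exp (c * K - ln ell + 1)"
  have Mpos: "0 < M" unfolding M_def by simp
  show ?thesis
  proof (intro exI[of _ M] ballI impI)
    fix \<rho> :: "real^'n \<Rightarrow> real"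
    assume rho: "\<rho> \<in> densities L" and sup: "sup_norm L \<rho> > ereal M"
    have rm[measurable]: "\<rho> \<in> borel_measurable borel" and rnn: "\<And>x. 0 \<le> \<rho> x"
      using rho by (auto simp: densities_def)
    have meas: "(\<lambda>x. ereal \<bar>\<rho> x\<bar>) \<in> borel_measurable (restrict_space lborel (cube L))"
      by (rule measurable_restrict_space1) simp
    have "0 < emeasure (restrict_space lborel (cube L)) {x \<in> space (restrict_space lborel (cube L)). ereal M < ereal \<bar>\<rho> x\<bar>}"
      using esssup_pos_measure[OF meas, of "ereal M"] sup unfolding sup_norm_def by simp
    also have "{x \<in> space (restrict_space lborel (cube L)). ereal M < ereal \<bar>\<rho> x\<bar>} = {x \<in> S.C. M < \<rho> x}"
      using rnn by (auto simp: S.C_def space_restrict_space)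
    also have "emeasure (restrict_space lborel (cube L)) {x \<in> S.C. M < \<rho> x} = emeasure lborel {x \<in> S.C. M < \<rho> x}"
      by (subst emeasure_restrict_space) (auto simp: S.C_def)
    finally have big: "0 < emeasure lborel {x \<in> S.C. M < \<rho> x}" .
    interpret T: step V L a V0 \<rho> M
      using rho Mpos big by unfold_locales auto
    have ellT: "T.ell = ell" by (simp add: T.ell_def ell_def)
    have "ln M + ln T.ell = c * K + 1" unfolding M_def ellT by simp
    then have MK: "ln M + ln T.ell \<ge> c * (2 * real (card (FF::(real^'n) set)) * V0 + 2 * S.W / T.ell) + 1"
      unfolding K_def ellT by simp
    have "free_energy L V \<theta> \<rho> > free_energy L V \<theta> T.rho2"
      unfolding free_energy_def c_def[symmetric] by (rule T.step_main[OF c0 MK])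
    then show "\<exists>\<rho>'\<in>densities L. free_energy L V \<theta> \<rho> > free_energy L V \<theta> \<rho>'"
      using T.rho2_dens by blast
  qed
qed

end
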